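(* Let $n\ge3$, $1\le s<n$, and let $D=\mathrm{pdiag}(d_1,\dots,d_n)$ with $d_1\le\dots\le d_s\le 0\le d_{s+1}\le\dots\le d_n$. Then for every integer $k\ge2$ and all $i,j\in[n]$, the $(i,j)$ entry of the max-plus power $D^k$ is $$(D^k)_{ij}=\begin{cases}(k-2)d_n & \text{if } \max(i,j)\le s,\\ \max\{k d_i,(k-2)d_n\} & \text{if } i=j>s,\\ \max\{(k-1)d_{\max(i,j)},(k-2)d_n\} & \text{if } i\neq j,\ \max(i,j)>s.\end{cases}$$
   Context: Max-plus conventions: $\varepsilon=-\infty$, $\oplus=\max$, $\otimes=+$; $(A\otimes B)_{ij}=\max_t(A_{it}+B_{tj})$ and $D^k$ is the $k$-fold max-plus product $D\otimes\cdots\otimes D$. $\mathrm{pdiag}(d_1,\dots,d_n)$ is the $n\times n$ matrix with real diagonal entries $d_1,\dots,d_n$ and all off-diagonal entries equal to the real number $0$. *)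

theory Defs
  imports "HOL-Library.Extended_Real"
begin

text \<open>Max-plus matrices of size n x n are represented as functions
  nat => nat => ereal, with indices ranging over {1..n}; the max-plus zero
  epsilon is -infinity (MInfty).\<close>

definition mp_mult :: "nat \<Rightarrow> (nat \<Rightarrow> nat \<Rightarrow> ereal) \<Rightarrow> (nat \<Rightarrow> nat \<Rightarrow> ereal) \<Rightarrow> (nat \<Rightarrow> nat \<Rightarrow> ereal)" where
  "mp_mult n A B = (\<lambda>i j. Max ((\<lambda>t. A i t + B t j) ` {1..n}))"

fun mp_pow :: "nat \<Rightarrow> (nat \<Rightarrow> nat \<Rightarrow> ereal) \<Rightarrow> nat \<Rightarrow> (nat \<Rightarrow> nat \<Rightarrow> ereal)" where
  "mp_pow n D 0 = D"
| "mp_pow n D (Suc 0) = D"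
| "mp_pow n D (Suc (Suc k)) = mp_mult n (mp_pow n D (Suc k)) D"

definition pdiag :: "(nat \<Rightarrow> real) \<Rightarrow> nat \<Rightarrow> nat \<Rightarrow> ereal" where
  "pdiag d = (\<lambda>i j. if i = j then ereal (d i) else 0)"

end

theory Submission
  imports Defs
begin

definition FF :: "nat \<Rightarrow> nat \<Rightarrow> (nat \<Rightarrow> real) \<Rightarrow> real \<Rightarrow> nat \<Rightarrow> nat \<Rightarrow> real" where
  "FF n s d K i j = (if max i j \<le> s then (K - 2) * d n
     else if i = j then max (K * d i) ((K - 2) * d n)
     else max ((K - 1) * d (max i j)) ((K - 2) * d n))"

lemma Max_ereal_eq:
  assumes "finite S" "S \<noteq> {}" "\<forall>t\<in>S. f t \<le> ereal T"
    "\<exists>t\<in>S. ereal A \<le> f t" "\<exists>t\<in>S. ereal B \<le> f t" "T = max A B"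
  shows "Max (f ` S) = ereal T"
proof (rule antisym)
  show "Max (f ` S) \<le> ereal T" using assms by (simp add: Max_le_iff)
  have "ereal A \<le> Max (f ` S)" "ereal B \<le> Max (f ` S)" using assms by (auto simp: Max_ge_iff)
  then show "ereal T \<le> Max (f ` S)" using assms(6) by (auto simp: max_def)
qed

lemma pdiag_ereal: "pdiag d t j = ereal (if t = j then d j else 0)"
  by (simp add: pdiag_def zero_ereal_def)

locale mpsetup =
  fixes n s :: nat and d :: "nat \<Rightarrow> real"
  assumes n3: "n \<ge> 3" and s1: "1 \<le> s" and sn: "s < n"
    and mono: "\<And>i j. 1 \<le> i \<Longrightarrow> i \<le> j \<Longrightarrow> j \<le> n \<Longrightarrow> d i \<le> d j"
    and ds: "d s \<le> 0" and ds1: "0 \<le> d (s + 1)"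
begin

lemma neg: "1 \<le> x \<Longrightarrow> x \<le> s \<Longrightarrow> d x \<le> 0"
  using mono[of x s] ds sn by auto

lemma pos: "s < x \<Longrightarrow> x \<le> n \<Longrightarrow> 0 \<le> d x"
  using mono[of "s+1" x] ds1 by auto

lemma dn: "1 \<le> x \<Longrightarrow> x \<le> n \<Longrightarrow> d x \<le> d n"
  using mono[of x n] by auto

lemma m0: "0 \<le> d n" using pos[of n] sn by auto

lemma kmono: "0 \<le> K \<Longrightarrow> 1 \<le> x \<Longrightarrow> x \<le> y \<Longrightarrow> y \<le> n \<Longrightarrow> K * d x \<le> K * d y"
  using mono[of x y] by (simp add: mult_left_mono)

lemma step_upper:
  assumes K: "K \<ge> 2" and i: "i \<in> {1..n}" and j: "j \<in> {1..n}" and t: "t \<in> {1..n}"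
  shows "FF n s d K i t + (if t = j then d j else 0) \<le> FF n s d (K + 1) i j"
proof -
  let ?m = "d n"
  have e: "(K + 1) - 2 = K - 1" by simp
  have e2: "(K + 1) - 1 = K" by simp
  have low: "(K - 1) * ?m \<le> FF n s d (K + 1) i j"
    unfolding FF_def e by (auto simp: le_max_iff_disj)
  have m: "0 \<le> ?m" by (rule m0)
  have Km: "(K - 2) * ?m \<le> (K - 1) * ?m" using m by (simp add: algebra_simps)
  show ?thesis
  proof (cases "t = j")
    case False
    show ?thesis
    proof (cases "max i t \<le> s")
      case True
      then show ?thesis using False Km low by (simp add: FF_def)
    next
      case ns: False
      show ?thesis
      proof (cases "i = t")
        case True
        have ij: "i \<noteq> j" using True False by simp
        have "max i j > s" using ns True by auto
        then have T: "FF n s d (K + 1) i j = max (K * d (max i j)) ((K - 1) * ?m)"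
          using ij unfolding FF_def e e2 by auto
        have "K * d i \<le> K * d (max i j)" using kmono[of K i "max i j"] K i j by auto
        moreover have "FF n s d K i t = max (K * d i) ((K - 2) * ?m)"
          using True ns by (simp add: FF_def)
        ultimately show ?thesis using False T max.mono[OF _ Km, of "K * d i" "K * d (max i j)"] by simp
      next
        case it: False
        have "(K - 1) * d (max i t) \<le> (K - 1) * ?m"
          using kmono[of "K - 1" "max i t" n] K i t by auto
        moreover have "FF n s d K i t = max ((K - 1) * d (max i t)) ((K - 2) * ?m)"
          using it ns unfolding FF_def by auto
        ultimately have "FF n s d K i t \<le> (K - 1) * ?m" using Km by simp
        then show ?thesis using False low by simp
      qed
    qed
  next
    case True
    have dj: "d j \<le> ?m" using dn j by auto
    show ?thesis
    proof (cases "max i j \<le> s")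
      case c1: True
      have "d j \<le> 0" using neg[of j] c1 j by auto
      then show ?thesis using True c1 dj m by (simp add: FF_def algebra_simps)
    next
      case c2: False
      show ?thesis
      proof (cases "i = j")
        case True
        then show ?thesis using c2 \<open>t = j\<close> dj by (simp add: FF_def algebra_simps)
      next
        case False
        have "d j \<le> d (max i j)" using mono[of j "max i j"] i j by auto
        then have a: "(K - 1) * d (max i j) + d j \<le> K * d (max i j)"
          by (simp add: algebra_simps)
        have b: "(K - 2) * ?m + d j \<le> (K - 1) * ?m" using dj by (simp add: algebra_simps)
        have F1: "FF n s d K i j = max ((K - 1) * d (max i j)) ((K - 2) * ?m)"
          using c2 False unfolding FF_def by auto
        have F2: "FF n s d (K + 1) i j = max (K * d (max i j)) ((K - 1) * ?m)"
          using c2 False unfolding FF_def e e2 by auto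
        have "max ((K - 1) * d (max i j)) ((K - 2) * ?m) + d j
              = max ((K - 1) * d (max i j) + d j) ((K - 2) * ?m + d j)" by (simp add: max_def)
        then show ?thesis using F1 F2 max.mono[OF a b] \<open>t = j\<close> by simp
      qed
    qed
  qed
qed

lemma step_lowers:
  assumes K: "K \<ge> 2" and i: "i \<in> {1..n}" and j: "j \<in> {1..n}"
  defines "h \<equiv> \<lambda>t. FF n s d K i t + (if t = j then d j else 0)"
  shows "\<exists>A. FF n s d (K + 1) i j = max A ((K - 1) * d n) \<and> (\<exists>t\<in>{1..n}. A \<le> h t)
      \<and> (\<exists>t\<in>{1..n}. (K - 1) * d n \<le> h t)"
proof -
  let ?m = "d n"
  have m: "0 \<le> ?m" by (rule m0)
  have nn: "n \<in> {1..n}" using sn by auto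
  have hn: "(K - 1) * ?m \<le> h n"
  proof -
    have "(K - 1) * ?m \<le> FF n s d K i n"
    proof (cases "i = n")
      case True
      then show ?thesis using sn m by (simp add: FF_def algebra_simps)
    next
      case False
      then have "max i n = n" using i by auto
      then show ?thesis using sn False by (simp add: FF_def algebra_simps)
    qed
    moreover have "0 \<le> (if n = j then d j else 0)" using m by auto
    ultimately show ?thesis unfolding h_def by linarith
  qed
  show ?thesis
  proof (cases "max i j \<le> s")
    case True
    then show ?thesis using hn nn by (intro exI[of _ "(K - 1) * ?m"]) (auto simp: FF_def algebra_simps)
  next
    case c2: False
    show ?thesis
    proof (cases "i = j")
      case True
      have "(K + 1) * d i \<le> h i" unfolding h_def using True c2
        by (simp add: FF_def algebra_simps)
      then show ?thesis using hn nn True c2 i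
        by (intro exI[of _ "(K + 1) * d i"]) (auto simp: FF_def algebra_simps)
    next
      case False
      have "\<exists>t\<in>{1..n}. K * d (max i j) \<le> h t"
      proof (cases "i < j")
        case True
        then have "max i j = j" by auto
        then have "K * d (max i j) \<le> h j" unfolding h_def using c2 False
          by (simp add: FF_def algebra_simps)
        then show ?thesis using j by auto
      next
        case ij: False
        then have "max i j = i" by auto
        then have "K * d (max i j) \<le> h i" unfolding h_def using c2 False
          by (simp add: FF_def algebra_simps)
        then show ?thesis using i by auto
      qed
      then show ?thesis using hn nn False c2
        by (intro exI[of _ "K * d (max i j)"]) (auto simp: FF_def algebra_simps)
    qed
  qed
qed

lemma step:
  assumes K: "K \<ge> 2" and i: "i \<in> {1..n}" and j: "j \<in> {1..n}"
    and IH: "\<And>a b. a \<in> {1..n} \<Longrightarrow> b \<in> {1..n} \<Longrightarrow> A a b = ereal (FF n s d K a b)"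
  shows "mp_mult n A (pdiag d) i j = ereal (FF n s d (K + 1) i j)"
proof -
  define h where "h \<equiv> \<lambda>t. FF n s d K i t + (if t = j then d j else 0)"
  have eq: "\<And>t. t \<in> {1..n} \<Longrightarrow> A i t + pdiag d t j = ereal (h t)"
    using IH i by (simp add: pdiag_ereal h_def)
  have img: "(\<lambda>t. A i t + pdiag d t j) ` {1..n} = (\<lambda>t. ereal (h t)) ` {1..n}"
    using eq by (auto intro!: image_cong)
  obtain B where B: "FF n s d (K + 1) i j = max B ((K - 1) * d n)"
    "\<exists>t\<in>{1..n}. B \<le> h t" "\<exists>t\<in>{1..n}. (K - 1) * d n \<le> h t"
    using step_lowers[OF K i j] unfolding h_def by blast
  show ?thesis unfolding mp_mult_def img
    apply (rule Max_ereal_eq[where A = B and B = "(K - 1) * d n"])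
    subgoal by simp
    subgoal using sn by auto
    subgoal using step_upper[OF K i j] by (simp add: h_def)
    subgoal using B(2) by auto
    subgoal using B(3) by auto
    subgoal using B(1) by simp
    done
qed

lemma base2:
  assumes i: "i \<in> {1..n}" and j: "j \<in> {1..n}"
  shows "mp_mult n (pdiag d) (pdiag d) i j = ereal (FF n s d 2 i j)"
proof -
  define h where "h \<equiv> \<lambda>t. (if i = t then d i else 0) + (if t = j then d j else 0)"
  have img: "(\<lambda>t. pdiag d i t + pdiag d t j) ` {1..n} = (\<lambda>t. ereal (h t)) ` {1..n}"
    by (auto simp: pdiag_ereal h_def intro!: image_cong)
  obtain t0 where t0: "t0 \<in> {1..n}" "t0 \<noteq> i" "t0 \<noteq> j"
  proof -
    have "card ({1..n} - {i, j}) \<ge> 1"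
    proof -
      have "card {i, j} \<le> 2" by (simp add: card_insert_le_m1)
      moreover have "card ({1..n} - {i, j}) \<ge> card {1..n} - card {i,j}"
        by (rule diff_card_le_card_Diff) auto
      ultimately show ?thesis using n3 by auto
    qed
    then obtain t where "t \<in> {1..n} - {i, j}"
      by (metis card.empty ex_in_conv not_one_le_zero)
    then show ?thesis using that by auto
  qed
  have h0: "h t0 = 0" using t0 by (simp add: h_def)
  have di: "d i \<le> d n" "d j \<le> d n" using dn i j by auto
  have up: "\<forall>t\<in>{1..n}. h t \<le> FF n s d 2 i j"
  proof
    fix t assume t: "t \<in> {1..n}"
    show "h t \<le> FF n s d 2 i j"
    proof (cases "max i j \<le> s")
      case True
      then have "d i \<le> 0" "d j \<le> 0" using neg i j by auto
      then show ?thesis using True by (auto simp: h_def FF_def)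
    next
      case False
      have "d i \<le> d (max i j)" "d j \<le> d (max i j)" using mono i j
        by (auto simp: max_def)
      moreover have "0 \<le> d (max i j)" using pos[of "max i j"] False i j by auto
      ultimately show ?thesis using False by (auto simp: h_def FF_def)
    qed
  qed
  have lows: "\<exists>A. FF n s d 2 i j = max A 0 \<and> (\<exists>t\<in>{1..n}. A \<le> h t)"
  proof (cases "max i j \<le> s")
    case True
    have "FF n s d 2 i j = max 0 0" using True by (simp add: FF_def)
    moreover have "\<exists>t\<in>{1..n}. 0 \<le> h t" using t0 h0 by force
    ultimately show ?thesis by blast
  next
    case False
    show ?thesis
    proof (cases "i = j")
      case True
      then show ?thesis using False i by (intro exI[of _ "2 * d i"]) (auto simp: FF_def h_def)
    next
      case ij: False
      have "\<exists>t\<in>{1..n}. d (max i j) \<le> h t"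
        using i j ij by (cases "i < j") (auto simp: h_def max_def intro: bexI[of _ j] bexI[of _ i])
      then show ?thesis using False ij by (intro exI[of _ "d (max i j)"]) (auto simp: FF_def)
    qed
  qed
  then obtain A where A: "FF n s d 2 i j = max A 0" "\<exists>t\<in>{1..n}. A \<le> h t" by blast
  show ?thesis unfolding mp_mult_def img
    apply (rule Max_ereal_eq[where A = A and B = 0])
    subgoal by simp
    subgoal using sn by auto
    subgoal using up by simp
    subgoal using A(2) by auto
    subgoal using t0 h0 by force
    subgoal using A(1) by simp
    done
qed

lemma main:
  assumes "k \<ge> 2" shows "\<forall>i\<in>{1..n}. \<forall>j\<in>{1..n}. mp_pow n (pdiag d) k i j = ereal (FF n s d (real k) i j)"
  using assms
proof (induction k rule: dec_induct)
  case base
  then show ?case using base2 by (simp add: numeral_2_eq_2)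
next
  case (step k)
  obtain k' where k': "k = Suc k'" using step.hyps by (cases k) auto
  have "mp_pow n (pdiag d) (Suc k) = mp_mult n (mp_pow n (pdiag d) k) (pdiag d)"
    using k' by simp
  moreover have "real (Suc k) = real k + 1" by simp
  ultimately show ?case using mpsetup.step[OF mpsetup_axioms, of "real k" _ _ "mp_pow n (pdiag d) k"] step
    by (auto simp: ac_simps)
qed

end

theorem proposition4p4:
  fixes n s :: nat and d :: "nat \<Rightarrow> real"
  assumes "n \<ge> 3" and "1 \<le> s" and "s < n"
    and "\<And>i j. 1 \<le> i \<Longrightarrow> i \<le> j \<Longrightarrow> j \<le> n \<Longrightarrow> d i \<le> d j"
    and "d s \<le> 0" and "0 \<le> d (s + 1)"
    and "k \<ge> (2::nat)" and "i \<in> {1..n}" and "j \<in> {1..n}"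
  shows "mp_pow n (pdiag d) k i j =
    (if max i j \<le> s then ereal ((real k - 2) * d n)
     else if i = j then ereal (max (real k * d i) ((real k - 2) * d n))
     else ereal (max ((real k - 1) * d (max i j)) ((real k - 2) * d n)))"
proof -
  interpret mpsetup n s d using assms by unfold_locales auto
  show ?thesis using main[OF assms(7)] assms(8,9) by (simp add: FF_def)
qed

end
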